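(* Let $T$ be a quantizable map satisfying Condition 1 and let $U=U_\Bbbk$ be a quantization of $T$ with respect to a partition $\mathcal M_\Bbbk$ of size $N_\Bbbk$ from a sequence satisfying Condition 2. There is a constant $D(T)$, independent of $n$ and $N_\Bbbk$, such that for every $f\in\mathrm{Lip}(I_c)$ and every integer $n\geq1$, $$\|U^{-n}\mathrm{Op}_\Bbbk(f)U^{n}-\mathrm{Op}_\Bbbk(f\circ T^n)\|\leq D(T)\,\|f\|_{\mathrm{Lip}}\,\frac{\Lambda_{\max}^n}{N_\Bbbk},$$ where $\|\cdot\|$ is the operator norm and $\Lambda_{\max}=\max_j\Lambda_j$.
   Context: Condition 1: $T:[0,1]\to[0,1]$, integers $\Lambda_1,\dots,\Lambda_l\geq2$ with $\sum\Lambda_j^{-1}=1$, consecutive intervals $I_1,\dots,I_l$ with $|I_j|=\Lambda_j^{-1}$, and $T$ affine with slope $\Lambda_j$ on $I_j$ mapping $I_j$ onto $[0,1]$. $\mathcal M_\Bbbk$ is the partition of $[0,1]$ into $E_i=[(i-1)/N_\Bbbk,i/N_\Bbbk]$; Condition 2 for a sequence $(\mathcal M_\Bbbk)$: $N_{\Bbbk+1}/N_\Bbbk$ is an integer $>1$ and all endpoints of the $I_j$ are endpoints of $\mathcal M_1$. With $B_\Bbbk(i,j)=|E_i\cap T^{-1}E_j|/|E_i|$, a quantization is a unitary $N_\Bbbk\times N_\Bbbk$ matrix $U_\Bbbk$ with $B_\Bbbk(j,i)=|U_\Bbbk(i,j)|^2$ for all $i,j$; $T$ is quantizable if such $U_\Bbbk$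 exist for all $\Bbbk$ for some sequence satisfying Condition 2. $\mathrm{Op}_\Bbbk(f)$ is the diagonal matrix whose $(i,i)$ entry is the average $N_\Bbbk\int_{E_i}f\,dx$. $I_c$ is the circle obtained from $[0,1]$ by identifying $0$ and $1$, with distance $d(x,y)=\min\{|x-y|,|x-y-1|\}$ (for $x\geq y$ representatives in $[0,1]$); $\|f\|_{\mathrm{Lip}}=\sup_x|f(x)|+\sup_{x\neq y}|f(x)-f(y)|/d(x,y)$ and $\mathrm{Lip}(I_c)$ is the space of functions with finite Lipschitz norm. *)

theory Defs
  imports "HOL-Analysis.Analysis" "Jordan_Normal_Form.Schur_Decomposition"
begin

(* Left endpoint a_j of the interval I_j = [a_j, a_(j+1)], a_j = sum_{i<j} 1/Lambda_i (0-based j). *)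
definition endpt :: "nat list \<Rightarrow> nat \<Rightarrow> real" where
  "endpt Lam j = (\<Sum>i<j. 1 / real (Lam ! i))"

definition cond1 :: "(real \<Rightarrow> real) \<Rightarrow> nat list \<Rightarrow> bool" where
  "cond1 T Lam \<longleftrightarrow>
     (\<forall>j<length Lam. Lam ! j \<ge> 2) \<and>
     (\<Sum>j<length Lam. 1 / real (Lam ! j)) = 1 \<and>
     (\<forall>x\<in>{0..1}. T x \<in> {0..1}) \<and>
     (\<forall>j<length Lam. \<forall>x. endpt Lam j < x \<and> x < endpt Lam (Suc j) \<longrightarrow>
          T x = real (Lam ! j) * (x - endpt Lam j))"

(* Cell E_(i+1) = [i/N, (i+1)/N] of the partition M with N cells (0-based index i < N). *)
definition cell :: "nat \<Rightarrow> nat \<Rightarrow> real set" where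
  "cell N i = {real i / real N .. real (Suc i) / real N}"

definition Bmat :: "(real \<Rightarrow> real) \<Rightarrow> nat \<Rightarrow> nat \<Rightarrow> nat \<Rightarrow> real" where
  "Bmat T N i j = measure lebesgue (cell N i \<inter> T -` cell N j) / measure lebesgue (cell N i)"

definition unitary_mat :: "complex mat \<Rightarrow> nat \<Rightarrow> bool" where
  "unitary_mat U n \<longleftrightarrow> U \<in> carrier_mat n n \<and>
     mat_adjoint U * U = 1\<^sub>m n \<and> U * mat_adjoint U = 1\<^sub>m n"

definition is_quantization :: "(real \<Rightarrow> real) \<Rightarrow> nat \<Rightarrow> complex mat \<Rightarrow> bool" where
  "is_quantization T N U \<longleftrightarrow> unitary_mat U N \<and>
     (\<forall>i<N. \<forall>j<N. Bmat T N j i = (cmod (U $$ (i, j)))\<^sup>2)"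

definition cond2 :: "nat list \<Rightarrow> (nat \<Rightarrow> nat) \<Rightarrow> bool" where
  "cond2 Lam N \<longleftrightarrow>
     (\<forall>k\<ge>1. 0 < N k \<and> N k dvd N (Suc k) \<and> N k < N (Suc k)) \<and>
     (\<forall>j\<le>length Lam. \<exists>i::nat. endpt Lam j = real i / real (N 1))"

definition quantizable :: "(real \<Rightarrow> real) \<Rightarrow> nat list \<Rightarrow> bool" where
  "quantizable T Lam \<longleftrightarrow>
     (\<exists>N. cond2 Lam N \<and> (\<forall>k\<ge>1. \<exists>U. is_quantization T (N k) U))"

definition Op :: "nat \<Rightarrow> (real \<Rightarrow> real) \<Rightarrow> complex mat" where
  "Op N f = mat N N (\<lambda>(i, j). if i = j
      then complex_of_real (real N * integral (cell N i) f) else 0)"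

definition circ_dist :: "real \<Rightarrow> real \<Rightarrow> real" where
  "circ_dist x y = min \<bar>x - y\<bar> (1 - \<bar>x - y\<bar>)"

definition lip_pairs :: "(real \<Rightarrow> real) \<Rightarrow> real set" where
  "lip_pairs f = {\<bar>f x - f y\<bar> / circ_dist x y | x y. x \<in> {0..<1} \<and> y \<in> {0..<1} \<and> x \<noteq> y}"

definition lip_circ :: "(real \<Rightarrow> real) \<Rightarrow> bool" where
  "lip_circ f \<longleftrightarrow> f 0 = f 1 \<and> bdd_above ((\<lambda>x. \<bar>f x\<bar>) ` {0..<1}) \<and> bdd_above (lip_pairs f)"

definition lip_norm :: "(real \<Rightarrow> real) \<Rightarrow> real" where
  "lip_norm f = (SUP x\<in>{0..<1}. \<bar>f x\<bar>) + Sup (lip_pairs f)"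

definition vnorm :: "complex vec \<Rightarrow> real" where
  "vnorm x = sqrt (\<Sum>i<dim_vec x. (cmod (x $ i))\<^sup>2)"

definition opnorm :: "complex mat \<Rightarrow> real" where
  "opnorm A = Sup {vnorm (A *\<^sub>v x) | x. x \<in> carrier_vec (dim_col A) \<and> vnorm x \<le> 1}"

end

theory Submission
  imports Defs
begin

lemma circ_dist_sym: "circ_dist x y = circ_dist y x"
  unfolding circ_dist_def by (simp add: abs_minus_commute)

lemma circ_dist_le_abs: "circ_dist x y \<le> \<bar>x - y\<bar>"
  unfolding circ_dist_def by simp

lemma circ_dist_frac_int:
  fixes a b :: real and z :: int
  shows "circ_dist (frac a) (frac b) \<le> \<bar>a - b - of_int z\<bar>"
proof -
  define d where "d = frac a - frac b"
  define k where "k = \<lfloor>a\<rfloor> - \<lfloor>b\<rfloor> - z"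
  have e: "a - b - of_int z = d + of_int k"
    unfolding d_def k_def frac_def by simp
  have d1: "\<bar>d\<bar> < 1" unfolding d_def using frac_lt_1[of a] frac_lt_1[of b] frac_ge_0[of a] frac_ge_0[of b] by linarith
  have cd: "circ_dist (frac a) (frac b) = min \<bar>d\<bar> (1 - \<bar>d\<bar>)" unfolding circ_dist_def d_def by simp
  consider "k = 0" | "k \<ge> 1" | "k \<le> -1" by linarith
  then show ?thesis
  proof cases
    case 1 then show ?thesis using cd e by simp
  next
    case 2
    hence "real_of_int k \<ge> 1" by simp
    then show ?thesis using cd e d1 by (auto simp: min_def abs_if split: if_splits)
  next
    case 3
    hence "real_of_int k \<le> -1" by simp
    then show ?thesis using cd e d1 by (auto simp: min_def abs_if split: if_splits)
  qed
qed

lemma circ_dist_frac: "circ_dist (frac a) (frac b) \<le> \<bar>a - b\<bar>"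
  using circ_dist_frac_int[of a b 0] by simp

lemma clip_identity:
  fixes x y a a' :: real
  assumes "x \<le> y" "a \<le> a'"
  shows "min a' (max a y) - min a' (max a x) = min y (max x a') - min y (max x a)"
  using assms by (auto simp: min_def max_def)

locale qsetup =
  fixes T :: "real \<Rightarrow> real" and Lam :: "nat list"
  assumes c1: "cond1 T Lam"
begin

abbreviation "l \<equiv> length Lam"
abbreviation "a \<equiv> endpt Lam"
definition "MM = Max (set Lam)"

lemma Lam_ge2: "m < l \<Longrightarrow> Lam ! m \<ge> 2"
  using c1 unfolding cond1_def by auto

lemma sum_inv: "(\<Sum>j<l. 1 / real (Lam ! j)) = 1"
  using c1 unfolding cond1_def by auto

lemma T_01: "x \<in> {0..1} \<Longrightarrow> T x \<in> {0..1}"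
  using c1 unfolding cond1_def by auto

lemma T_branch: "m < l \<Longrightarrow> a m < x \<Longrightarrow> x < a (Suc m) \<Longrightarrow> T x = real (Lam ! m) * (x - a m)"
  using c1 unfolding cond1_def by auto

lemma l_pos: "l > 0"
  using sum_inv by (cases Lam) auto

lemma a0: "a 0 = 0" unfolding endpt_def by simp
lemma aSuc: "a (Suc m) = a m + 1 / real (Lam ! m)" unfolding endpt_def by simp
lemma al: "a l = 1" unfolding endpt_def using sum_inv by simp

lemma a_mono: "m \<le> m' \<Longrightarrow> a m \<le> a m'"
  unfolding endpt_def by (rule sum_mono2) auto

lemma a_nonneg: "a m \<ge> 0" using a_mono[of 0 m] a0 by simp

lemma a_strict: "m < m' \<Longrightarrow> m < l \<Longrightarrow> a m < a m'"
proof -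
  assume "m < m'" "m < l"
  have "a m < a (Suc m)" using aSuc[of m] Lam_ge2[OF \<open>m<l\<close>] by simp
  also have "\<dots> \<le> a m'" using a_mono \<open>m < m'\<close> by simp
  finally show ?thesis .
qed

lemma a_le1: "m \<le> l \<Longrightarrow> a m \<le> 1" using a_mono[of m l] al by simp

lemma MM_ge: "m < l \<Longrightarrow> Lam ! m \<le> MM"
  unfolding MM_def by (simp add: nth_mem)

lemma MM_ge2: "MM \<ge> 2"
  using MM_ge[OF l_pos] Lam_ge2[OF l_pos] by simp

lemma branch:
  assumes "0 \<le> x" "x < 1"
  shows "\<exists>m<l. a m \<le> x \<and> x < a (Suc m)"
proof -
  define S where "S = {m. m \<le> l \<and> a m \<le> x}"
  have fin: "finite S" unfolding S_def by auto
  have "0 \<in> S" unfolding S_def using a0 assms by simp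
  define m where "m = Max S"
  have mS: "m \<in> S" unfolding m_def using fin \<open>0\<in>S\<close> Max_in by blast
  have "m \<noteq> l" using mS al assms unfolding S_def by auto
  hence ml: "m < l" using mS unfolding S_def by auto
  have "Suc m \<notin> S" using Max_ge[OF fin, of "Suc m"] unfolding m_def by auto
  hence "x < a (Suc m)" using ml unfolding S_def by auto
  thus ?thesis using ml mS unfolding S_def by auto
qed

definition F :: "real \<Rightarrow> real" where
  "F x = (\<Sum>m<l. real (Lam ! m) * (min (a (Suc m)) (max (a m) x) - a m))"

definition Tt :: "real \<Rightarrow> real" where
  "Tt x = frac (F x)"

lemma F_diff:
  assumes "0 \<le> x" "x \<le> y" "y \<le> 1"
  shows "0 \<le> F y - F x" "F y - F x \<le> real MM * (y - x)"
proof -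
  define \<psi> where "\<psi> t = min y (max x t)" for t
  have eq0: "F y - F x = (\<Sum>m<l. real (Lam ! m) * (min (a (Suc m)) (max (a m) y) - min (a (Suc m)) (max (a m) x)))"
    unfolding F_def by (simp add: sum_subtractf[symmetric] algebra_simps)
  have eq: "F y - F x = (\<Sum>m<l. real (Lam ! m) * (\<psi> (a (Suc m)) - \<psi> (a m)))"
    unfolding eq0 \<psi>_def using clip_identity[OF assms(2) a_mono[of m "Suc m" for m]]
    by (intro sum.cong refl) simp
  have nn: "\<psi> (a (Suc m)) - \<psi> (a m) \<ge> 0" for m
    using a_mono[of m "Suc m"] unfolding \<psi>_def by (auto simp: min_def max_def)
  show "0 \<le> F y - F x" unfolding eq using nn by (intro sum_nonneg) auto
  have "F y - F x \<le> (\<Sum>m<l. real MM * (\<psi> (a (Suc m)) - \<psi> (a m)))"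
    unfolding eq using nn MM_ge by (intro sum_mono mult_right_mono) auto
  also have "\<dots> = real MM * (\<psi> (a l) - \<psi> (a 0))"
    using sum_lessThan_telescope[of "\<lambda>m. \<psi> (a m)" l] by (simp add: sum_distrib_left[symmetric])
  also have "\<psi> (a l) - \<psi> (a 0) = y - x" unfolding \<psi>_def al a0 using assms by simp
  finally show "F y - F x \<le> real MM * (y - x)" .
qed

lemma F0: "F 0 = 0"
proof -
  have "min (a (Suc m)) (max (a m) 0) = a m" for m
    using a_nonneg[of m] a_mono[of m "Suc m"] by (simp add: min_def max_def)
  thus ?thesis unfolding F_def by simp
qed

lemma F1: "F 1 = real l"
proof -
  have "F 1 = (\<Sum>m<l. (1::real))"
    unfolding F_def
  proof (intro sum.cong refl)
    fix m assume "m \<in> {..<l}"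
    hence ml: "m < l" by simp
    have "a (Suc m) \<le> 1" using a_le1[of "Suc m"] ml by simp
    hence "min (a (Suc m)) (max (a m) 1) = a (Suc m)" using a_mono[of m "Suc m"] by (simp add: min_def max_def)
    thus "real (Lam ! m) * (min (a (Suc m)) (max (a m) 1) - a m) = 1"
      using aSuc[of m] Lam_ge2[OF ml] by simp
  qed
  thus ?thesis by simp
qed

lemma F_branch:
  assumes ml: "m < l" and x: "a m \<le> x" "x \<le> a (Suc m)"
  shows "F x = real m + real (Lam ! m) * (x - a m)"
proof -
  have "F x = (\<Sum>m'<l. (if m' < m then 1 else 0) + (if m' = m then real (Lam ! m) * (x - a m) else 0))"
    unfolding F_def
  proof (intro sum.cong refl)
    fix m' assume "m' \<in> {..<l}"
    hence m'l: "m' < l" by simp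
    consider "m' < m" | "m' = m" | "m' > m" by linarith
    thus "real (Lam ! m') * (min (a (Suc m')) (max (a m') x) - a m') =
      (if m' < m then 1 else 0) + (if m' = m then real (Lam ! m) * (x - a m) else 0)"
    proof cases
      case 1
      hence "a (Suc m') \<le> a m" using a_mono by simp
      hence "min (a (Suc m')) (max (a m') x) = a (Suc m')" using x a_mono[of m' "Suc m'"] by (simp add: min_def max_def)
      thus ?thesis using 1 aSuc[of m'] Lam_ge2[OF m'l] by simp
    next
      case 2 thus ?thesis using x by (simp add: min_def max_def)
    next
      case 3
      hence "a (Suc m) \<le> a m'" using a_mono by simp
      hence "min (a (Suc m')) (max (a m') x) = a m'" using x a_mono[of m' "Suc m'"] by (simp add: min_def max_def)
      thus ?thesis using 3 by simp
    qed
  qed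
  also have "\<dots> = (\<Sum>m'<l. (if m' < m then 1 else 0)) + (\<Sum>m'<l. (if m' = m then real (Lam ! m) * (x - a m) else 0))"
    by (rule sum.distrib)
  also have "(\<Sum>m'<l. (if m' < m then 1 else 0::real)) = real m"
  proof -
    have "(\<Sum>m'<l. (if m' < m then 1 else 0::real)) = real (card ({..<l} \<inter> {m'. m' < m}))"
      by (simp add: sum.If_cases)
    also have "{..<l} \<inter> {m'. m' < m} = {..<m}" using ml by auto
    finally show ?thesis by simp
  qed
  also have "(\<Sum>m'<l. (if m' = m then real (Lam ! m) * (x - a m) else 0)) = real (Lam ! m) * (x - a m)"
    using ml by simp
  finally show ?thesis .
qed

lemma Tt_branch:
  assumes ml: "m < l" and x: "a m \<le> x" "x < a (Suc m)"
  shows "Tt x = real (Lam ! m) * (x - a m)"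
proof -
  have y0: "0 \<le> real (Lam ! m) * (x - a m)" using x by simp
  have "real (Lam ! m) * (x - a m) < real (Lam ! m) * (1 / real (Lam ! m))"
    using x aSuc[of m] Lam_ge2[OF ml] by (intro mult_strict_left_mono) auto
  hence y1: "real (Lam ! m) * (x - a m) < 1" using Lam_ge2[OF ml] by simp
  show ?thesis unfolding Tt_def F_branch[OF ml x(1) less_imp_le[OF x(2)]]
    using y0 y1 by (subst frac_unique_iff) auto
qed

lemma Tt_01: "Tt x \<in> {0..<1}"
  unfolding Tt_def using frac_lt_1 by auto

lemma T_eq_Tt: "x \<in> {0..1} \<Longrightarrow> x \<notin> a ` {..l} \<Longrightarrow> T x = Tt x"
proof -
  assume x: "x \<in> {0..1}" "x \<notin> a ` {..l}"
  have "x \<noteq> 1" using x al by force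
  then obtain m where m: "m < l" "a m \<le> x" "x < a (Suc m)" using branch[of x] x by auto
  have "x \<noteq> a m" using x m by force
  thus ?thesis using T_branch[of m x] Tt_branch[of m x] m by simp
qed

lemma Tt_lip:
  assumes x: "x \<in> {0..1}" and y: "y \<in> {0..1}"
  shows "circ_dist (Tt x) (Tt y) \<le> real MM * circ_dist x y"
proof -
  have main: "circ_dist (Tt x) (Tt y) \<le> real MM * circ_dist x y" if xy: "x \<le> y" "x \<in> {0..1}" "y \<in> {0..1}" for x y
  proof -
    have d1: "0 \<le> F y - F x" "F y - F x \<le> real MM * (y - x)" using F_diff[of x y] xy by auto
    have d2: "F 1 - F y \<le> real MM * (1 - y)" "F x - F 0 \<le> real MM * (x - 0)" using F_diff[of y 1] F_diff[of 0 x] xy by auto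
    have e1: "circ_dist (Tt y) (Tt x) \<le> real MM * (y - x)"
      unfolding Tt_def using circ_dist_frac[of "F y" "F x"] d1 by simp
    have "circ_dist (Tt y) (Tt x) \<le> \<bar>F y - F x - of_int (int l)\<bar>"
      unfolding Tt_def by (rule circ_dist_frac_int)
    also have "\<bar>F y - F x - of_int (int l)\<bar> = real l - (F y - F x)"
      using F_diff[of y 1] F_diff[of 0 x] xy F0 F1 by (simp add: abs_if)
    also have "\<dots> \<le> real MM * (1 - (y - x))" using d2 F0 F1 by (simp add: algebra_simps)
    finally have e2: "circ_dist (Tt y) (Tt x) \<le> real MM * (1 - (y - x))" .
    have "circ_dist x y = min (y - x) (1 - (y - x))" unfolding circ_dist_def using xy by simp
    hence "real MM * circ_dist x y = min (real MM * (y - x)) (real MM * (1 - (y - x)))"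
      by (simp add: min_mult_distrib_left)
    thus ?thesis using e1 e2 circ_dist_sym by simp
  qed
  show ?thesis
  proof (cases "x \<le> y")
    case True thus ?thesis using main x y by blast
  next
    case False thus ?thesis using main[of y x] x y circ_dist_sym by simp
  qed
qed

end

lemma avg_bound:
  fixes g :: "real \<Rightarrow> real"
  assumes st: "s < t" and gi: "g integrable_on {s..t}" and S: "finite S" and d: "\<delta> \<ge> 0"
    and bd: "\<And>x. x \<in> {s..t} - S \<Longrightarrow> \<bar>g x - c\<bar> \<le> \<delta>"
  shows "\<bar>integral {s..t} g - c * (t - s)\<bar> \<le> \<delta> * (t - s)"
proof -
  define g' where "g' x = (if x \<in> S then c else g x)" for x
  have eqi: "integral {s..t} g' = integral {s..t} g"
    by (rule integral_spike[of S]) (auto simp: g'_def S negligible_finite)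
  have gi': "g' integrable_on {s..t}"
    by (rule integrable_spike_finite[OF S _ gi]) (auto simp: g'_def)
  have "integral {s..t} (\<lambda>x. g' x - c) = integral {s..t} g - c * (t - s)"
    using integral_diff[OF gi' integrable_const_ivl[of c s t]] eqi st by simp
  moreover have "norm (integral {s..t} (\<lambda>x. g' x - c)) \<le> \<delta> * measure lborel (cbox s t)"
  proof (rule has_integral_bound[OF d])
    show "((\<lambda>x. g' x - c) has_integral integral {s..t} (\<lambda>x. g' x - c)) (cbox s t)"
      using integrable_integral[OF integrable_diff[OF gi' integrable_const_ivl[of c s t]]]
      by (simp add: cbox_interval)
    show "norm (g' x - c) \<le> \<delta>" if "x \<in> cbox s t" for x
      using that bd[of x] d by (auto simp: g'_def cbox_interval)
  qed
  ultimately show ?thesis using st by simp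
qed

lemma cell_avg:
  fixes g :: "real \<Rightarrow> real"
  assumes n: "n > 0" and gi: "g integrable_on cell n i" and S: "finite S" and d: "\<delta> \<ge> 0"
    and bd: "\<And>x. x \<in> cell n i - S \<Longrightarrow> \<bar>g x - c\<bar> \<le> \<delta>"
  shows "\<bar>real n * integral (cell n i) g - c\<bar> \<le> \<delta>"
proof -
  have st: "real i / real n < real (Suc i) / real n" using n by (simp add: divide_strict_right_mono)
  have len: "real (Suc i) / real n - real i / real n = 1 / real n" by (simp add: diff_divide_distrib[symmetric])
  have "\<bar>integral (cell n i) g - c * (1 / real n)\<bar> \<le> \<delta> * (1 / real n)"
    using avg_bound[OF st _ S d, of g c] gi bd unfolding cell_def len by auto
  hence "real n * \<bar>integral (cell n i) g - c * (1 / real n)\<bar> \<le> real n * (\<delta> * (1 / real n))"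
    by (rule mult_left_mono) simp
  moreover have "real n * integral (cell n i) g - c = real n * (integral (cell n i) g - c * (1 / real n))"
    using n by (simp add: field_simps)
  ultimately show ?thesis using n by (simp add: abs_mult)
qed

lemma cell_sub: "i < n \<Longrightarrow> cell n i \<subseteq> {0..1}"
  unfolding cell_def by (auto simp: divide_le_eq_1)

context qsetup begin

definition "LL f = Sup (lip_pairs f)"

lemma lip_pairs_bdd: "lip_circ f \<Longrightarrow> bdd_above (lip_pairs f)"
  unfolding lip_circ_def by auto

lemma LL_nonneg: assumes "lip_circ f" shows "LL f \<ge> 0"
proof -
  have "\<bar>f 0 - f (1/2)\<bar> / circ_dist 0 (1/2) \<in> lip_pairs f"
    unfolding lip_pairs_def by force
  moreover have "\<bar>f 0 - f (1/2)\<bar> / circ_dist 0 (1/2) \<ge> 0" unfolding circ_dist_def by simp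
  ultimately show ?thesis unfolding LL_def using cSup_upper[OF _ lip_pairs_bdd[OF assms]] by fastforce
qed

lemma f_lip01:
  assumes f: "lip_circ f" and x: "x \<in> {0..<1}" and y: "y \<in> {0..<1}"
  shows "\<bar>f x - f y\<bar> \<le> LL f * circ_dist x y"
proof (cases "x = y")
  case True thus ?thesis by (simp add: circ_dist_def)
next
  case False
  have cpos: "circ_dist x y > 0" using x y False unfolding circ_dist_def by auto
  have "\<bar>f x - f y\<bar> / circ_dist x y \<in> lip_pairs f" unfolding lip_pairs_def using x y False by blast
  hence "\<bar>f x - f y\<bar> / circ_dist x y \<le> LL f" unfolding LL_def using cSup_upper[OF _ lip_pairs_bdd[OF f]] by blast
  thus ?thesis using cpos by (simp add: divide_le_eq mult.commute)
qed

lemma f_lip: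
  assumes f: "lip_circ f" and x: "x \<in> {0..1}" and y: "y \<in> {0..1}"
  shows "\<bar>f x - f y\<bar> \<le> LL f * circ_dist x y"
proof -
  define x' where "x' = (if x = 1 then 0 else x)"
  define y' where "y' = (if y = 1 then 0 else y)"
  have f1: "f 1 = f 0" using f unfolding lip_circ_def by simp
  have e1: "f x = f x'" "f y = f y'" unfolding x'_def y'_def using f1 by auto
  have e2: "circ_dist x' y' = circ_dist x y"
    unfolding x'_def y'_def circ_dist_def using x y by (auto simp: min_def)
  have "x' \<in> {0..<1}" "y' \<in> {0..<1}" using x y unfolding x'_def y'_def by auto
  hence "\<bar>f x' - f y'\<bar> \<le> LL f * circ_dist x' y'" by (rule f_lip01[OF f])
  thus ?thesis unfolding e1 e2 .
qed

lemma Tt_01c: "Tt x \<in> {0..1}" using Tt_01[of x] by auto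

lemma Tt_iter_01: "x \<in> {0..1} \<Longrightarrow> (Tt ^^ k) x \<in> {0..1}"
  by (induction k) (use Tt_01c in auto)

lemma iter_lip:
  assumes f: "lip_circ f"
  shows "x \<in> {0..1} \<Longrightarrow> y \<in> {0..1} \<Longrightarrow>
    \<bar>f ((Tt ^^ k) x) - f ((Tt ^^ k) y)\<bar> \<le> LL f * real MM ^ k * circ_dist x y"
proof (induction k arbitrary: x y)
  case 0 thus ?case using f_lip[OF f] by simp
next
  case (Suc k)
  have tx: "Tt x \<in> {0..1}" "Tt y \<in> {0..1}" using Tt_01c by auto
  have "\<bar>f ((Tt ^^ Suc k) x) - f ((Tt ^^ Suc k) y)\<bar> = \<bar>f ((Tt ^^ k) (Tt x)) - f ((Tt ^^ k) (Tt y))\<bar>"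
    by (simp add: funpow_Suc_right del: funpow.simps)
  also have "\<dots> \<le> LL f * real MM ^ k * circ_dist (Tt x) (Tt y)" using Suc.IH[OF tx] .
  also have "\<dots> \<le> LL f * real MM ^ k * (real MM * circ_dist x y)"
    using Tt_lip[OF Suc.prems] LL_nonneg[OF f] by (intro mult_left_mono) auto
  finally show ?case by (simp add: algebra_simps)
qed

lemma iter_cont:
  assumes f: "lip_circ f"
  shows "continuous_on {0..1} (\<lambda>x. f ((Tt ^^ k) x))"
proof (rule lipschitz_on_continuous_on)
  show "(LL f * real MM ^ k)-lipschitz_on {0..1} (\<lambda>x. f ((Tt ^^ k) x))"
  proof (rule lipschitz_onI)
    show "0 \<le> LL f * real MM ^ k" using LL_nonneg[OF f] by simp
    fix x y assume "x \<in> {0..1::real}" "y \<in> {0..1::real}"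
    hence "\<bar>f ((Tt ^^ k) x) - f ((Tt ^^ k) y)\<bar> \<le> LL f * real MM ^ k * circ_dist x y" by (rule iter_lip[OF f])
    also have "\<dots> \<le> LL f * real MM ^ k * \<bar>x - y\<bar>"
      using LL_nonneg[OF f] circ_dist_le_abs by (intro mult_left_mono) auto
    finally show "dist (f ((Tt ^^ k) x)) (f ((Tt ^^ k) y)) \<le> LL f * real MM ^ k * dist x y"
      by (simp add: dist_real_def)
  qed
qed

lemma iter_integrable:
  assumes f: "lip_circ f" and i: "i < n"
  shows "(\<lambda>x. f ((Tt ^^ k) x)) integrable_on cell n i"
  unfolding cell_def
  by (rule integrable_continuous_interval, rule continuous_on_subset[OF iter_cont[OF f]])
     (use cell_sub[OF i] in \<open>auto simp: cell_def\<close>)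

lemma ae_eq: "\<exists>Z. finite Z \<and> (\<forall>x\<in>{0..1} - Z. (T ^^ k) x = (Tt ^^ k) x)"
proof (induction k)
  case 0 thus ?case by auto
next
  case (Suc k)
  then obtain Z where Z: "finite Z" "\<forall>x\<in>{0..1} - Z. (T ^^ k) x = (Tt ^^ k) x" by blast
  define Z' where "Z' = a ` {..l} \<union> (\<lambda>(m, z). a m + z / real (Lam ! m)) ` ({..<l} \<times> Z)"
  have fin: "finite Z'" unfolding Z'_def using Z(1) by auto
  have "(T ^^ Suc k) x = (Tt ^^ Suc k) x" if x: "x \<in> {0..1} - Z'" for x
  proof -
    have xb: "x \<notin> a ` {..l}" using x unfolding Z'_def by auto
    have TT: "T x = Tt x" using T_eq_Tt xb x by auto
    have "x \<noteq> 1" using xb al by force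
    then obtain m where m: "m < l" "a m \<le> x" "x < a (Suc m)" using branch[of x] x by auto
    have Ttx: "Tt x = real (Lam ! m) * (x - a m)" using Tt_branch[OF m] .
    have "Tt x \<notin> Z"
    proof
      assume "Tt x \<in> Z"
      hence "a m + Tt x / real (Lam ! m) \<in> Z'" unfolding Z'_def using m(1) by force
      moreover have "a m + Tt x / real (Lam ! m) = x" using Ttx Lam_ge2[OF m(1)] by simp
      ultimately show False using x by simp
    qed
    moreover have "Tt x \<in> {0..1}" using Tt_01c by auto
    ultimately have "(T ^^ k) (Tt x) = (Tt ^^ k) (Tt x)" using Z(2) by auto
    thus ?thesis using TT by (simp add: funpow_Suc_right del: funpow.simps)
  qed
  thus ?case using fin by blast
qed

lemma int_eq:
  assumes "S \<subseteq> {0..1}"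
  shows "integral S (f \<circ> (T ^^ k)) = integral S (\<lambda>x. f ((Tt ^^ k) x))"
proof -
  obtain Z where Z: "finite Z" "\<forall>x\<in>{0..1} - Z. (T ^^ k) x = (Tt ^^ k) x" using ae_eq by blast
  show ?thesis
    by (rule integral_spike[of Z]) (use Z assms in \<open>auto simp: negligible_finite\<close>)
qed

end

locale qgrid = qsetup +
  fixes n :: nat and p :: "nat \<Rightarrow> nat"
  assumes npos: "n > 0" and pdef: "\<And>m. m \<le> l \<Longrightarrow> a m = real (p m) / real n"
begin

lemma p0: "p 0 = 0" using pdef[of 0] a0 npos by simp
lemma pl: "p l = n" using pdef[of l] al npos by (simp add: divide_eq_1_iff)

lemma pstep:
  assumes ml: "m < l"
  shows "p m < p (Suc m)" "Lam ! m * (p (Suc m) - p m) = n"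
proof -
  have "real (p (Suc m)) / real n - real (p m) / real n = 1 / real (Lam ! m)"
    using pdef[of m] pdef[of "Suc m"] ml aSuc[of m] by simp
  hence e: "real (p (Suc m)) - real (p m) = real n / real (Lam ! m)"
    using npos by (simp add: field_simps)
  have L: "real (Lam ! m) > 0" using Lam_ge2[OF ml] by simp
  have "real n / real (Lam ! m) > 0" using npos L by simp
  hence "real (p m) < real (p (Suc m))" using e by linarith
  thus "p m < p (Suc m)" by simp
  hence "real (Lam ! m * (p (Suc m) - p m)) = real (Lam ! m) * (real (p (Suc m)) - real (p m))"
    by (simp add: of_nat_diff)
  also have "\<dots> = real n" using e L by simp
  finally show "Lam ! m * (p (Suc m) - p m) = n" by (simp only: of_nat_eq_iff)
qed

lemma cell_branch:
  assumes j: "j < n"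
  shows "\<exists>m<l. p m \<le> j \<and> j < p (Suc m)"
proof -
  have "0 \<le> real j / real n" "real j / real n < 1" using j by auto
  then obtain m where m: "m < l" "a m \<le> real j / real n" "real j / real n < a (Suc m)"
    using branch by blast
  have "real (p m) / real n \<le> real j / real n" "real j / real n < real (p (Suc m)) / real n"
    using m pdef[of m] pdef[of "Suc m"] by auto
  hence "p m \<le> j" "j < p (Suc m)" using npos by (auto simp: divide_le_cancel divide_less_cancel)
  thus ?thesis using m by auto
qed

lemma window_le:
  assumes ml: "m < l" and j: "j < p (Suc m)" "p m \<le> j"
  shows "Lam ! m * (j - p m) + Lam ! m \<le> n"
proof -
  have "Lam ! m * (j - p m) + Lam ! m = Lam ! m * (Suc j - p m)" using j by (simp add: Suc_diff_le)
  also have "\<dots> \<le> Lam ! m * (p (Suc m) - p m)" using j by (intro mult_le_mono2) auto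
  finally show ?thesis using pstep[OF ml] by simp
qed

lemma support:
  assumes U: "is_quantization T n U" and i: "i < n" and j: "j < n"
    and ml: "m < l" and jm: "p m \<le> j" "j < p (Suc m)"
    and nz: "U $$ (i, j) \<noteq> 0"
  shows "Lam ! m * (j - p m) \<le> i \<and> i < Lam ! m * (j - p m) + Lam ! m"
proof (rule ccontr)
  assume neg: "\<not> ?thesis"
  define \<Lambda> where "\<Lambda> = real (Lam ! m)"
  define q where "q = real j - real (p m)"
  have \<Lambda>pos: "\<Lambda> > 0" unfolding \<Lambda>_def using Lam_ge2[OF ml] by simp
  have neg': "real i + 1 \<le> \<Lambda> * q \<or> \<Lambda> * q + \<Lambda> \<le> real i"
  proof -
    have h1: "i + 1 \<le> Lam ! m * (j - p m) \<or> Lam ! m * (j - p m) + Lam ! m \<le> i" using neg by auto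
    have eqq: "real (Lam ! m * (j - p m)) = \<Lambda> * q" unfolding \<Lambda>_def q_def using jm by (simp add: of_nat_diff)
    have "real (i + 1) \<le> real (Lam ! m * (j - p m)) \<or> real (Lam ! m * (j - p m) + Lam ! m) \<le> real i"
      using h1 by (simp only: of_nat_le_iff)
    moreover have "real (j - p m) = q" unfolding q_def using jm by (simp add: of_nat_diff)
    ultimately show ?thesis by (simp add: \<Lambda>_def add.commute)
  qed
  have sub: "cell n j \<inter> T -` cell n i \<subseteq> {real j / real n, real (Suc j) / real n}"
  proof
    fix x assume x: "x \<in> cell n j \<inter> T -` cell n i"
    show "x \<in> {real j / real n, real (Suc j) / real n}"
    proof (rule ccontr)
      assume "x \<notin> {real j / real n, real (Suc j) / real n}"
      with x have x1: "real j / real n < x" "x < real (Suc j) / real n" unfolding cell_def by auto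
      have nn: "real n > 0" using npos by simp
      have xn: "real j < x * real n" "x * real n < real j + 1" using x1 nn by (auto simp: field_simps)
      have "real (p m) / real n \<le> real j / real n" by (intro divide_right_mono) (use jm in auto)
      hence am: "a m < x" using x1 pdef[of m] ml by simp
      have "real (Suc j) / real n \<le> real (p (Suc m)) / real n"
        using jm by (intro divide_right_mono) auto
      hence am1: "x < a (Suc m)" using x1 pdef[of "Suc m"] ml by simp
      have Tx: "T x = \<Lambda> * (x - a m)" using T_branch[OF ml am am1] unfolding \<Lambda>_def .
      have Txn: "T x * real n = \<Lambda> * (x * real n - real (p m))"
        unfolding Tx using pdef[of m] ml nn by (simp add: field_simps)
      have lo: "\<Lambda> * q < T x * real n" unfolding Txn q_def
        using xn \<Lambda>pos by (intro mult_strict_left_mono) auto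
      have hi: "T x * real n < \<Lambda> * q + \<Lambda>" unfolding Txn q_def
        using mult_strict_left_mono[of "x * real n - real (p m)" "real j - real (p m) + 1" \<Lambda>] xn \<Lambda>pos
        by (simp add: algebra_simps)
      have "T x \<in> cell n i" using x by auto
      hence "real i \<le> T x * real n" "T x * real n \<le> real i + 1"
        unfolding cell_def using nn by (auto simp: field_simps)
      thus False using lo hi neg' by linarith
    qed
  qed
  have "negligible (cell n j \<inter> T -` cell n i)"
    by (rule negligible_subset[OF _ sub]) (rule negligible_finite, simp)
  hence "cell n j \<inter> T -` cell n i \<in> null_sets lebesgue" by (simp add: negligible_iff_null_sets)
  hence "emeasure lebesgue (cell n j \<inter> T -` cell n i) = 0" by (rule null_setsD1)
  hence "measure lebesgue (cell n j \<inter> T -` cell n i) = 0" by (simp add: measure_def)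
  hence "Bmat T n j i = 0" unfolding Bmat_def by simp
  moreover have "Bmat T n j i = (cmod (U $$ (i, j)))\<^sup>2" using U i j unfolding is_quantization_def by blast
  ultimately have "(cmod (U $$ (i, j)))\<^sup>2 = 0" by simp
  thus False using nz by simp
qed

lemma card_col:
  assumes U: "is_quantization T n U" and j: "j < n"
  shows "card {i. i < n \<and> U $$ (i, j) \<noteq> 0} \<le> MM"
proof -
  obtain m where m: "m < l" "p m \<le> j" "j < p (Suc m)" using cell_branch[OF j] by blast
  have "{i. i < n \<and> U $$ (i, j) \<noteq> 0} \<subseteq> {Lam ! m * (j - p m) ..< Lam ! m * (j - p m) + Lam ! m}"
    using support[OF U _ j m] by auto
  hence "card {i. i < n \<and> U $$ (i, j) \<noteq> 0} \<le> card {Lam ! m * (j - p m) ..< Lam ! m * (j - p m) + Lam ! m}"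
    by (intro card_mono) auto
  hence "card {i. i < n \<and> U $$ (i, j) \<noteq> 0} \<le> Lam ! m" by simp
  thus ?thesis using MM_ge[OF m(1)] by simp
qed

lemma card_row:
  assumes U: "is_quantization T n U" and i: "i < n"
  shows "card {j. j < n \<and> U $$ (i, j) \<noteq> 0} \<le> l"
proof -
  have "{j. j < n \<and> U $$ (i, j) \<noteq> 0} \<subseteq> (\<lambda>m. p m + i div Lam ! m) ` {..<l}"
  proof
    fix j assume "j \<in> {j. j < n \<and> U $$ (i, j) \<noteq> 0}"
    hence j: "j < n" "U $$ (i, j) \<noteq> 0" by auto
    obtain m where m: "m < l" "p m \<le> j" "j < p (Suc m)" using cell_branch[OF j(1)] by blast
    have s: "Lam ! m * (j - p m) \<le> i" "i < Lam ! m * Suc (j - p m)" using support[OF U i j(1) m j(2)] by auto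
    have "i div Lam ! m = j - p m" by (rule div_nat_eqI[OF s])
    thus "j \<in> (\<lambda>m. p m + i div Lam ! m) ` {..<l}" using m by force
  qed
  hence "card {j. j < n \<and> U $$ (i, j) \<noteq> 0} \<le> card ((\<lambda>m. p m + i div Lam ! m) ` {..<l})"
    by (intro card_mono) auto
  also have "\<dots> \<le> card {..<l}" by (rule card_image_le) simp
  finally show ?thesis by simp
qed

lemma step_err:
  assumes U: "is_quantization T n U" and f: "lip_circ f" and i: "i < n" and j: "j < n"
    and nz: "U $$ (i, j) \<noteq> 0"
  shows "\<bar>real n * integral (cell n i) (f \<circ> (T ^^ k)) - real n * integral (cell n j) (f \<circ> (T ^^ Suc k))\<bar>
     \<le> 2 * LL f * real MM ^ Suc k / real n"
proof -
  obtain m where m: "m < l" "p m \<le> j" "j < p (Suc m)" using cell_branch[OF j] by blast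
  define w where "w = Lam ! m * (j - p m)"
  have s: "w \<le> i" "i < w + Lam ! m" using support[OF U i j m nz] unfolding w_def by auto
  have wl: "w + Lam ! m \<le> n" using window_le[OF m(1) m(3) m(2)] unfolding w_def .
  define g where "g x = f ((Tt ^^ k) x)" for x
  define K where "K = LL f * real MM ^ k"
  have K0: "K \<ge> 0" unfolding K_def using LL_nonneg[OF f] by simp
  define c where "c = g (real w / real n)"
  define \<delta> where "\<delta> = K * real MM / real n"
  have \<delta>0: "\<delta> \<ge> 0" unfolding \<delta>_def using K0 by simp
  have nn: "real n > 0" using npos by simp
  have LM: "real (Lam ! m) \<le> real MM" using MM_ge[OF m(1)] by simp
  have win: "\<bar>g y - c\<bar> \<le> \<delta>" if y: "real w / real n \<le> y" "y \<le> real (w + Lam ! m) / real n" for y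
  proof -
    have w01: "real w / real n \<in> {0..1}" using wl nn by (auto simp: field_simps)
    have "real (w + Lam ! m) / real n \<le> 1" using wl nn by (simp add: divide_le_eq_1)
    moreover have "0 \<le> real w / real n" by simp
    ultimately have y01: "y \<in> {0..1}" unfolding atLeastAtMost_iff using y(1) y(2) by linarith
    have e: "real (w + Lam ! m) / real n = real w / real n + real (Lam ! m) / real n"
      by (simp add: add_divide_distrib)
    hence h1: "\<bar>y - real w / real n\<bar> \<le> real (Lam ! m) / real n" unfolding abs_le_iff using y by linarith
    have h2: "real (Lam ! m) / real n \<le> real MM / real n" by (rule divide_right_mono[OF LM]) simp
    have "\<bar>g y - c\<bar> \<le> K * circ_dist y (real w / real n)"
      unfolding g_def c_def K_def by (rule iter_lip[OF f y01 w01])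
    also have "\<dots> \<le> K * \<bar>y - real w / real n\<bar>" using K0 circ_dist_le_abs by (intro mult_left_mono) auto
    also have "\<dots> \<le> K * (real MM / real n)"
      using K0 h1 h2 by (intro mult_left_mono) linarith+
    finally show ?thesis unfolding \<delta>_def by simp
  qed
  have I1: "\<bar>real n * integral (cell n i) g - c\<bar> \<le> \<delta>"
  proof (rule cell_avg[OF npos _ _ \<delta>0, of g i "{}"])
    show "g integrable_on cell n i" unfolding g_def by (rule iter_integrable[OF f i])
    fix x assume "x \<in> cell n i - {}"
    hence x: "real i / real n \<le> x" "x \<le> real (Suc i) / real n" unfolding cell_def by auto
    have "real w / real n \<le> real i / real n" by (intro divide_right_mono) (use s in auto)
    hence "real w / real n \<le> x" using x by linarith
    moreover have "real (Suc i) / real n \<le> real (w + Lam ! m) / real n"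
      by (intro divide_right_mono) (use s in auto)
    hence "x \<le> real (w + Lam ! m) / real n" using x by linarith
    ultimately show "\<bar>g x - c\<bar> \<le> \<delta>" by (rule win)
  qed simp
  have I2: "\<bar>real n * integral (cell n j) (\<lambda>x. g (Tt x)) - c\<bar> \<le> \<delta>"
  proof (rule cell_avg[OF npos _ _ \<delta>0, of _ j "{real j / real n, real (Suc j) / real n}"])
    have "(\<lambda>x. f ((Tt ^^ Suc k) x)) integrable_on cell n j" by (rule iter_integrable[OF f j])
    thus "(\<lambda>x. g (Tt x)) integrable_on cell n j" unfolding g_def by (simp add: funpow_Suc_right del: funpow.simps)
    fix x assume "x \<in> cell n j - {real j / real n, real (Suc j) / real n}"
    hence x1: "real j / real n < x" "x < real (Suc j) / real n" unfolding cell_def by auto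
    have xn: "real j < x * real n" "x * real n < real j + 1" using x1 nn by (auto simp: field_simps)
    have "real (p m) / real n \<le> real j / real n" by (intro divide_right_mono) (use m in auto)
    hence am: "a m \<le> x" using x1 pdef[of m] m by simp
    have "real (Suc j) / real n \<le> real (p (Suc m)) / real n"
      using m by (intro divide_right_mono) auto
    hence am1: "x < a (Suc m)" using x1 pdef[of "Suc m"] m by simp
    have Tx: "Tt x = real (Lam ! m) * (x - a m)" using Tt_branch[OF m(1) am am1] .
    have Txn: "Tt x * real n = real (Lam ! m) * (x * real n - real (p m))"
      unfolding Tx using pdef[of m] m nn by (simp add: field_simps)
    have rw: "real w = real (Lam ! m) * (real j - real (p m))" unfolding w_def using m by (simp add: of_nat_diff)
    have "real w \<le> Tt x * real n" unfolding Txn rw using xn by (intro mult_left_mono) auto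
    hence lo: "real w / real n \<le> Tt x" using nn by (simp add: field_simps)
    have "Tt x * real n \<le> real (Lam ! m) * (real j - real (p m) + 1)" unfolding Txn using xn by (intro mult_left_mono) auto
    hence "Tt x * real n \<le> real (w + Lam ! m)" using rw by (simp add: algebra_simps)
    hence hi: "Tt x \<le> real (w + Lam ! m) / real n" using nn by (simp add: field_simps)
    show "\<bar>g (Tt x) - c\<bar> \<le> \<delta>" by (rule win[OF lo hi])
  qed simp
  have e1: "integral (cell n i) (f \<circ> (T ^^ k)) = integral (cell n i) g"
    unfolding g_def by (rule int_eq[OF cell_sub[OF i]])
  have gg: "(\<lambda>x. f ((Tt ^^ Suc k) x)) = (\<lambda>x. g (Tt x))"
    unfolding g_def by (simp add: funpow_Suc_right del: funpow.simps)
  have e2: "integral (cell n j) (f \<circ> (T ^^ Suc k)) = integral (cell n j) (\<lambda>x. g (Tt x))"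
    using int_eq[OF cell_sub[OF j], of f "Suc k"] unfolding gg .
  have "\<bar>real n * integral (cell n i) (f \<circ> (T ^^ k)) - real n * integral (cell n j) (f \<circ> (T ^^ Suc k))\<bar> \<le> 2 * \<delta>"
    unfolding e1 e2 using I1 I2 by linarith
  also have "2 * \<delta> = 2 * LL f * real MM ^ Suc k / real n" unfolding \<delta>_def K_def by (simp add: mult.assoc mult.commute)
  finally show ?thesis .
qed

end

definition iso :: "complex mat \<Rightarrow> nat \<Rightarrow> bool" where
  "iso A n \<longleftrightarrow> A \<in> carrier_mat n n \<and>
     (\<forall>j<n. \<forall>j'<n. (\<Sum>i<n. cnj (A $$ (i, j)) * A $$ (i, j')) = (if j = j' then 1 else 0))"

lemma adj_carrier: "A \<in> carrier_mat n n \<Longrightarrow> mat_adjoint A \<in> carrier_mat n n"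
  unfolding mat_adjoint_def by (auto simp: mat_of_rows_def)

lemma adj_index: "A \<in> carrier_mat n n \<Longrightarrow> i < n \<Longrightarrow> j < n \<Longrightarrow> mat_adjoint A $$ (i, j) = cnj (A $$ (j, i))"
  unfolding mat_adjoint_def by (auto simp: mat_of_rows_index)

lemma mult_index_n:
  assumes "A \<in> carrier_mat n n" "B \<in> carrier_mat n n" "i < n" "j < n"
  shows "(A * B) $$ (i, j) = (\<Sum>k<n. A $$ (i, k) * B $$ (k, j))"
  using assms by (auto simp: scalar_prod_def lessThan_atLeast0 intro!: sum.cong)

lemma mult_vec_index_n:
  assumes "A \<in> carrier_mat n n" "v \<in> carrier_vec n" "i < n"
  shows "(A *\<^sub>v v) $ i = (\<Sum>k<n. A $$ (i, k) * v $ k)"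
  using assms by (auto simp: scalar_prod_def lessThan_atLeast0 intro!: sum.cong)

lemma unitary_iso:
  assumes "unitary_mat U n"
  shows "iso U n" "iso (mat_adjoint U) n"
proof -
  have U: "U \<in> carrier_mat n n" and h1: "mat_adjoint U * U = 1\<^sub>m n" and h2: "U * mat_adjoint U = 1\<^sub>m n"
    using assms unfolding unitary_mat_def by auto
  have A: "mat_adjoint U \<in> carrier_mat n n" by (rule adj_carrier[OF U])
  show "iso U n" unfolding iso_def
  proof (intro conjI U allI impI)
    fix j j' assume j: "j < n" and j': "j' < n"
    have "(mat_adjoint U * U) $$ (j, j') = (\<Sum>i<n. cnj (U $$ (i, j)) * U $$ (i, j'))"
      using mult_index_n[OF A U j j'] adj_index[OF U j] by simp
    thus "(\<Sum>i<n. cnj (U $$ (i, j)) * U $$ (i, j')) = (if j = j' then 1 else 0)"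
      using h1 j j' by simp
  qed
  show "iso (mat_adjoint U) n" unfolding iso_def
  proof (intro conjI A allI impI)
    fix j j' assume j: "j < n" and j': "j' < n"
    have "(U * mat_adjoint U) $$ (j, j') = (\<Sum>i<n. U $$ (j, i) * cnj (U $$ (j', i)))"
      using mult_index_n[OF U A j j'] adj_index[OF U _ j'] by simp
    also have "\<dots> = (\<Sum>i<n. cnj (mat_adjoint U $$ (i, j)) * mat_adjoint U $$ (i, j'))"
      using adj_index[OF U _ j] adj_index[OF U _ j'] by (intro sum.cong) auto
    finally show "(\<Sum>i<n. cnj (mat_adjoint U $$ (i, j)) * mat_adjoint U $$ (i, j')) = (if j = j' then 1 else 0)"
      using h2 j j' by simp
  qed
qed

lemma vnorm_nonneg: "vnorm x \<ge> 0"
  unfolding vnorm_def by (simp add: sum_nonneg)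

lemma vnorm_sq: "complex_of_real ((vnorm x)\<^sup>2) = (\<Sum>i<dim_vec x. x $ i * cnj (x $ i))"
proof -
  have "(vnorm x)\<^sup>2 = (\<Sum>i<dim_vec x. (cmod (x $ i))\<^sup>2)"
    unfolding vnorm_def by (simp add: sum_nonneg)
  hence "complex_of_real ((vnorm x)\<^sup>2) = (\<Sum>i<dim_vec x. complex_of_real ((cmod (x $ i))\<^sup>2))"
    by (simp only: of_real_sum)
  thus ?thesis by (simp only: complex_norm_square)
qed

lemma iso_norm:
  assumes A: "iso A n" and v: "v \<in> carrier_vec n"
  shows "vnorm (A *\<^sub>v v) = vnorm v"
proof -
  have Ac: "A \<in> carrier_mat n n" using A unfolding iso_def by auto
  have orth: "\<And>j j'. j < n \<Longrightarrow> j' < n \<Longrightarrow> (\<Sum>i<n. A $$ (i, j) * cnj (A $$ (i, j'))) = (if j = j' then 1 else 0)"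
  proof -
    fix j j' assume "j < n" "j' < n"
    hence "(\<Sum>i<n. cnj (A $$ (i, j)) * A $$ (i, j')) = (if j = j' then 1 else 0)" using A unfolding iso_def by auto
    hence "cnj (\<Sum>i<n. cnj (A $$ (i, j)) * A $$ (i, j')) = (if j = j' then 1 else 0)" by auto
    thus "(\<Sum>i<n. A $$ (i, j) * cnj (A $$ (i, j'))) = (if j = j' then 1 else 0)" by (simp add: cnj_sum)
  qed
  have dv: "dim_vec v = n" "dim_vec (A *\<^sub>v v) = n" using v Ac by auto
  have "complex_of_real ((vnorm (A *\<^sub>v v))\<^sup>2) = (\<Sum>i<n. (A *\<^sub>v v) $ i * cnj ((A *\<^sub>v v) $ i))"
    using vnorm_sq dv by simp
  also have "\<dots> = (\<Sum>i<n. (\<Sum>j<n. A $$ (i, j) * v $ j) * (\<Sum>j'<n. cnj (A $$ (i, j')) * cnj (v $ j')))"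
    using mult_vec_index_n[OF Ac v] by (intro sum.cong) (auto simp: cnj_sum)
  also have "\<dots> = (\<Sum>i<n. \<Sum>j<n. \<Sum>j'<n. (v $ j * cnj (v $ j')) * (A $$ (i, j) * cnj (A $$ (i, j'))))"
    by (simp add: sum_distrib_left sum_distrib_right mult_ac, rule sum.cong[OF refl], rule sum.swap)
  also have "\<dots> = (\<Sum>j<n. \<Sum>j'<n. \<Sum>i<n. (v $ j * cnj (v $ j')) * (A $$ (i, j) * cnj (A $$ (i, j'))))"
    by (subst sum.swap, subst (2) sum.swap, rule refl)
  also have "\<dots> = (\<Sum>j<n. \<Sum>j'<n. (v $ j * cnj (v $ j')) * (if j = j' then 1 else 0))"
    by (intro sum.cong refl) (simp add: sum_distrib_left[symmetric] orth)
  also have "\<dots> = (\<Sum>j<n. \<Sum>j'<n. if j = j' then v $ j * cnj (v $ j') else 0)"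
    by (intro sum.cong refl) simp
  also have "\<dots> = (\<Sum>j<n. v $ j * cnj (v $ j))"
    by (intro sum.cong refl) (simp add: sum.delta)
  also have "\<dots> = complex_of_real ((vnorm v)\<^sup>2)" using vnorm_sq dv by simp
  finally have "(vnorm (A *\<^sub>v v))\<^sup>2 = (vnorm v)\<^sup>2" by (simp only: of_real_eq_iff)
  thus ?thesis by (rule power2_eq_imp_eq) (simp_all add: vnorm_nonneg)
qed

lemma pow_mult_vec:
  assumes A: "A \<in> carrier_mat n n" and v: "v \<in> carrier_vec n"
  shows "(A ^\<^sub>m Suc k) *\<^sub>v v = (A ^\<^sub>m k) *\<^sub>v (A *\<^sub>v v)"
  using A v by (simp add: assoc_mult_mat_vec[of _ n n _ n])

lemma iso_pow_norm:
  assumes A: "iso A n"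
  shows "v \<in> carrier_vec n \<Longrightarrow> vnorm ((A ^\<^sub>m k) *\<^sub>v v) = vnorm v"
proof (induction k arbitrary: v)
  have Ac: "A \<in> carrier_mat n n" using A unfolding iso_def by auto
  { case 0 thus ?case using Ac by simp }
  { case (Suc k)
    have "A *\<^sub>v v \<in> carrier_vec n" using Ac Suc.prems by simp
    thus ?case using pow_mult_vec[OF Ac Suc.prems] Suc.IH iso_norm[OF A Suc.prems] by simp }
qed

lemma vnorm_triangle:
  assumes "dim_vec x = dim_vec y"
  shows "vnorm (x + y) \<le> vnorm x + vnorm y"
proof -
  have "vnorm (x + y) = L2_set (\<lambda>i. cmod ((x + y) $ i)) {..<dim_vec y}"
    unfolding vnorm_def L2_set_def by simp
  also have "\<dots> \<le> L2_set (\<lambda>i. cmod (x $ i) + cmod (y $ i)) {..<dim_vec y}"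
    by (rule L2_set_mono) (auto simp: norm_triangle_ineq)
  also have "\<dots> \<le> L2_set (\<lambda>i. cmod (x $ i)) {..<dim_vec y} + L2_set (\<lambda>i. cmod (y $ i)) {..<dim_vec y}"
    by (rule L2_set_triangle_ineq)
  also have "\<dots> = vnorm x + vnorm y" unfolding vnorm_def L2_set_def using assms by simp
  finally show ?thesis .
qed

lemma sq_sum_le:
  fixes \<alpha> b :: "nat \<Rightarrow> real"
  assumes a0: "\<And>j. \<alpha> j \<ge> 0" and b0: "\<And>j. b j \<ge> 0"
  shows "(\<Sum>j<n. \<alpha> j * b j)\<^sup>2 \<le> (\<Sum>j<n. \<alpha> j) * (\<Sum>j<n. \<alpha> j * (b j)\<^sup>2)"
proof -
  have "(\<Sum>j<n. \<alpha> j * b j) = (\<Sum>j<n. \<bar>sqrt (\<alpha> j)\<bar> * \<bar>sqrt (\<alpha> j) * b j\<bar>)"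
  proof (intro sum.cong refl)
    fix j
    have "\<bar>sqrt (\<alpha> j)\<bar> * \<bar>sqrt (\<alpha> j) * b j\<bar> = sqrt (\<alpha> j) * sqrt (\<alpha> j) * b j"
      using a0[of j] b0[of j] by (simp add: abs_mult)
    also have "\<dots> = \<alpha> j * b j" using a0[of j] by simp
    finally show "\<alpha> j * b j = \<bar>sqrt (\<alpha> j)\<bar> * \<bar>sqrt (\<alpha> j) * b j\<bar>" by simp
  qed
  also have "\<dots> \<le> L2_set (\<lambda>j. sqrt (\<alpha> j)) {..<n} * L2_set (\<lambda>j. sqrt (\<alpha> j) * b j) {..<n}"
    by (rule L2_set_mult_ineq)
  finally have le: "(\<Sum>j<n. \<alpha> j * b j) \<le> L2_set (\<lambda>j. sqrt (\<alpha> j)) {..<n} * L2_set (\<lambda>j. sqrt (\<alpha> j) * b j) {..<n}" .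
  have nn: "0 \<le> (\<Sum>j<n. \<alpha> j * b j)" using a0 b0 by (intro sum_nonneg) simp
  have "(\<Sum>j<n. \<alpha> j * b j)\<^sup>2 \<le> (L2_set (\<lambda>j. sqrt (\<alpha> j)) {..<n} * L2_set (\<lambda>j. sqrt (\<alpha> j) * b j) {..<n})\<^sup>2"
    using le nn by (rule power_mono)
  also have "\<dots> = (L2_set (\<lambda>j. sqrt (\<alpha> j)) {..<n})\<^sup>2 * (L2_set (\<lambda>j. sqrt (\<alpha> j) * b j) {..<n})\<^sup>2"
    by (simp add: power_mult_distrib)
  also have "(L2_set (\<lambda>j. sqrt (\<alpha> j)) {..<n})\<^sup>2 = (\<Sum>j<n. \<alpha> j)"
    unfolding L2_set_def using a0 by (simp add: sum_nonneg)
  also have "(L2_set (\<lambda>j. sqrt (\<alpha> j) * b j) {..<n})\<^sup>2 = (\<Sum>j<n. \<alpha> j * (b j)\<^sup>2)"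
    unfolding L2_set_def using a0 by (simp add: sum_nonneg power_mult_distrib)
  finally show ?thesis .
qed

lemma schur:
  assumes A: "A \<in> carrier_mat n n" and v: "v \<in> carrier_vec n" and R: "R \<ge> 0"
    and rows: "\<And>i. i < n \<Longrightarrow> (\<Sum>j<n. cmod (A $$ (i, j))) \<le> R"
    and cols: "\<And>j. j < n \<Longrightarrow> (\<Sum>i<n. cmod (A $$ (i, j))) \<le> R"
  shows "vnorm (A *\<^sub>v v) \<le> R * vnorm v"
proof -
  define \<alpha> where "\<alpha> i j = cmod (A $$ (i, j))" for i j
  define b where "b j = cmod (v $ j)" for j
  have dv: "dim_vec v = n" "dim_vec (A *\<^sub>v v) = n" using v A by auto
  have ci: "(cmod ((A *\<^sub>v v) $ i))\<^sup>2 \<le> R * (\<Sum>j<n. \<alpha> i j * (b j)\<^sup>2)" if i: "i < n" for i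
  proof -
    have "cmod ((A *\<^sub>v v) $ i) \<le> (\<Sum>j<n. \<alpha> i j * b j)"
      unfolding mult_vec_index_n[OF A v i] \<alpha>_def b_def
      by (rule order_trans[OF norm_sum]) (simp add: norm_mult)
    hence "(cmod ((A *\<^sub>v v) $ i))\<^sup>2 \<le> (\<Sum>j<n. \<alpha> i j * b j)\<^sup>2" by (rule power_mono) simp
    also have "\<dots> \<le> (\<Sum>j<n. \<alpha> i j) * (\<Sum>j<n. \<alpha> i j * (b j)\<^sup>2)"
      by (rule sq_sum_le) (simp_all add: \<alpha>_def b_def)
    also have "\<dots> \<le> R * (\<Sum>j<n. \<alpha> i j * (b j)\<^sup>2)"
      using rows[OF i] by (intro mult_right_mono) (auto simp: \<alpha>_def b_def intro!: sum_nonneg)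
    finally show ?thesis .
  qed
  have "(\<Sum>i<n. (cmod ((A *\<^sub>v v) $ i))\<^sup>2) \<le> (\<Sum>i<n. R * (\<Sum>j<n. \<alpha> i j * (b j)\<^sup>2))"
    using ci by (rule sum_mono) simp
  also have "\<dots> = R * (\<Sum>i<n. \<Sum>j<n. \<alpha> i j * (b j)\<^sup>2)"
    by (simp add: sum_distrib_left)
  also have "\<dots> = R * (\<Sum>j<n. \<Sum>i<n. \<alpha> i j * (b j)\<^sup>2)"
    by (subst sum.swap) (rule refl)
  also have "\<dots> = R * (\<Sum>j<n. (b j)\<^sup>2 * (\<Sum>i<n. \<alpha> i j))"
    by (simp add: sum_distrib_left mult.commute)
  also have "\<dots> \<le> R * (\<Sum>j<n. (b j)\<^sup>2 * R)"
    using cols R by (intro mult_left_mono sum_mono mult_left_mono) (auto simp: \<alpha>_def)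
  also have "\<dots> = R\<^sup>2 * (\<Sum>j<n. (b j)\<^sup>2)" by (simp add: sum_distrib_left power2_eq_square mult_ac)
  finally have le: "(\<Sum>i<n. (cmod ((A *\<^sub>v v) $ i))\<^sup>2) \<le> R\<^sup>2 * (\<Sum>j<n. (b j)\<^sup>2)" .
  have "vnorm (A *\<^sub>v v) = sqrt (\<Sum>i<n. (cmod ((A *\<^sub>v v) $ i))\<^sup>2)" unfolding vnorm_def using dv by simp
  also have "\<dots> \<le> sqrt (R\<^sup>2 * (\<Sum>j<n. (b j)\<^sup>2))" using le by (rule real_sqrt_le_mono)
  also have "\<dots> = R * vnorm v" unfolding vnorm_def b_def using dv R by (simp add: real_sqrt_mult)
  finally show ?thesis .
qed

definition Dg :: "nat \<Rightarrow> (nat \<Rightarrow> real) \<Rightarrow> complex mat" where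
  "Dg n d = mat n n (\<lambda>(i, j). if i = j then complex_of_real (d i) else 0)"

lemma Dg_carrier[simp]: "Dg n d \<in> carrier_mat n n" unfolding Dg_def by simp
lemma Dg_dim[simp]: "dim_row (Dg n d) = n" "dim_col (Dg n d) = n" unfolding Dg_def by simp_all

lemma conj_diag_entry:
  assumes U: "U \<in> carrier_mat n n" and j: "j < n" and j': "j' < n"
  shows "(mat_adjoint U * Dg n d * U) $$ (j, j') = (\<Sum>i<n. cnj (U $$ (i, j)) * U $$ (i, j') * complex_of_real (d i))"
proof -
  have A: "mat_adjoint U \<in> carrier_mat n n" by (rule adj_carrier[OF U])
  have e1: "(mat_adjoint U * Dg n d) $$ (j, i) = cnj (U $$ (i, j)) * complex_of_real (d i)" if i: "i < n" for i
  proof -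
    have "(mat_adjoint U * Dg n d) $$ (j, i) = (\<Sum>k<n. mat_adjoint U $$ (j, k) * Dg n d $$ (k, i))"
      by (rule mult_index_n[OF A Dg_carrier j i])
    also have "\<dots> = (\<Sum>k<n. if k = i then mat_adjoint U $$ (j, k) * complex_of_real (d i) else 0)"
      using i by (intro sum.cong refl) (auto simp: Dg_def)
    also have "\<dots> = mat_adjoint U $$ (j, i) * complex_of_real (d i)" using i by (simp add: sum.delta')
    finally show ?thesis using adj_index[OF U j i] by simp
  qed
  have "(mat_adjoint U * Dg n d * U) $$ (j, j') = (\<Sum>i<n. (mat_adjoint U * Dg n d) $$ (j, i) * U $$ (i, j'))"
    by (rule mult_index_n[OF mult_carrier_mat[OF A Dg_carrier] U j j'])
  also have "\<dots> = (\<Sum>i<n. cnj (U $$ (i, j)) * U $$ (i, j') * complex_of_real (d i))"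
    using e1 by (intro sum.cong refl) (simp add: mult_ac)
  finally show ?thesis .
qed

lemma Y_entry:
  assumes U: "iso U n" and j: "j < n" and j': "j' < n"
  shows "(mat_adjoint U * Dg n d * U - Dg n e) $$ (j, j') =
     (\<Sum>i<n. cnj (U $$ (i, j)) * U $$ (i, j') * complex_of_real (d i - e j))"
proof -
  have Uc: "U \<in> carrier_mat n n" using U unfolding iso_def by auto
  have orth: "(\<Sum>i<n. cnj (U $$ (i, j)) * U $$ (i, j')) = (if j = j' then 1 else 0)"
    using U j j' unfolding iso_def by auto
  have "(mat_adjoint U * Dg n d * U - Dg n e) $$ (j, j') = (mat_adjoint U * Dg n d * U) $$ (j, j') - Dg n e $$ (j, j')"
    using j j' by simp
  also have "Dg n e $$ (j, j') = (\<Sum>i<n. cnj (U $$ (i, j)) * U $$ (i, j')) * complex_of_real (e j)"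
    unfolding orth Dg_def using j j' by simp
  also have "\<dots> = (\<Sum>i<n. cnj (U $$ (i, j)) * U $$ (i, j') * complex_of_real (e j))"
    by (simp add: sum_distrib_right)
  finally show ?thesis unfolding conj_diag_entry[OF Uc j j']
    by (simp add: sum_subtractf[symmetric] right_diff_distrib)
qed

lemma iso_entry_le1:
  assumes U: "iso U n" and i: "i < n" and j: "j < n"
  shows "cmod (U $$ (i, j)) \<le> 1"
proof -
  have "(\<Sum>k<n. cnj (U $$ (k, j)) * U $$ (k, j)) = 1" using U j unfolding iso_def by auto
  moreover have "(\<Sum>k<n. cnj (U $$ (k, j)) * U $$ (k, j)) = (\<Sum>k<n. complex_of_real ((cmod (U $$ (k, j)))\<^sup>2))"
    by (intro sum.cong refl) (metis complex_norm_square mult.commute)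
  ultimately have "(\<Sum>k<n. complex_of_real ((cmod (U $$ (k, j)))\<^sup>2)) = 1" by simp
  hence s: "(\<Sum>k<n. (cmod (U $$ (k, j)))\<^sup>2) = 1"
    by (metis of_real_eq_1_iff of_real_sum)
  have "(cmod (U $$ (i, j)))\<^sup>2 \<le> (\<Sum>k<n. (cmod (U $$ (k, j)))\<^sup>2)"
    using i by (intro member_le_sum) auto
  hence "(cmod (U $$ (i, j)))\<^sup>2 \<le> 1\<^sup>2" using s by simp
  thus ?thesis by (rule power2_le_imp_le) simp
qed

lemma count_bound:
  fixes P :: "nat \<Rightarrow> nat \<Rightarrow> bool"
  assumes cl: "\<And>i. i < n \<Longrightarrow> card {j. j < n \<and> P i j} \<le> L"
    and cM: "\<And>j. j < n \<Longrightarrow> card {i. i < n \<and> P i j} \<le> M"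
    and j: "j < n"
  shows "(\<Sum>j'<n. \<Sum>i<n. if P i j \<and> P i j' then 1 else 0::real) \<le> real L * real M"
proof -
  have "(\<Sum>j'<n. \<Sum>i<n. if P i j \<and> P i j' then 1 else 0::real)
      = (\<Sum>i<n. \<Sum>j'<n. if P i j \<and> P i j' then 1 else 0::real)"
    by (rule sum.swap)
  also have "\<dots> = (\<Sum>i<n. (if P i j then 1 else 0) * (\<Sum>j'<n. if P i j' then 1 else 0::real))"
  proof (intro sum.cong refl)
    fix i show "(\<Sum>j'<n. if P i j \<and> P i j' then 1 else 0::real) = (if P i j then 1 else 0) * (\<Sum>j'<n. if P i j' then 1 else 0::real)"
      by (cases "P i j") simp_all
  qed
  also have "\<dots> \<le> (\<Sum>i<n. (if P i j then 1 else 0) * real L)"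
  proof (intro sum_mono mult_left_mono)
    fix i assume "i \<in> {..<n}"
    hence "card {j. j < n \<and> P i j} \<le> L" using cl by auto
    moreover have "(\<Sum>j'<n. if P i j' then 1 else 0::real) = real (card {j. j < n \<and> P i j})"
      by (simp add: sum.If_cases lessThan_def Collect_conj_eq)
    ultimately show "(\<Sum>j'<n. if P i j' then 1 else 0::real) \<le> real L" by simp
  qed simp
  also have "\<dots> = real L * (\<Sum>i<n. if P i j then 1 else 0::real)"
    by (simp add: sum_distrib_left mult.commute)
  also have "(\<Sum>i<n. if P i j then 1 else 0::real) = real (card {i. i < n \<and> P i j})"
    by (simp add: sum.If_cases lessThan_def Collect_conj_eq)
  also have "real L * real (card {i. i < n \<and> P i j}) \<le> real L * real M" using cM[OF j] by (intro mult_left_mono) auto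
  finally show ?thesis .
qed

lemma Y_norm:
  assumes U: "iso U n" and eps: "\<epsilon> \<ge> 0"
    and H: "\<And>i j. i < n \<Longrightarrow> j < n \<Longrightarrow> U $$ (i, j) \<noteq> 0 \<Longrightarrow> \<bar>d i - e j\<bar> \<le> \<epsilon>"
    and cl: "\<And>i. i < n \<Longrightarrow> card {j. j < n \<and> U $$ (i, j) \<noteq> 0} \<le> L"
    and cM: "\<And>j. j < n \<Longrightarrow> card {i. i < n \<and> U $$ (i, j) \<noteq> 0} \<le> M"
    and w: "w \<in> carrier_vec n"
  shows "vnorm ((mat_adjoint U * Dg n d * U - Dg n e) *\<^sub>v w) \<le> \<epsilon> * (real L * real M) * vnorm w"
proof -
  have Uc: "U \<in> carrier_mat n n" using U unfolding iso_def by auto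
  define P where "P i j = (U $$ (i, j) \<noteq> 0)" for i j
  have Yc: "mat_adjoint U * Dg n d * U - Dg n e \<in> carrier_mat n n"
    by (rule minus_carrier_mat) simp
  have ent: "cmod ((mat_adjoint U * Dg n d * U - Dg n e) $$ (j, j')) \<le> \<epsilon> * (\<Sum>i<n. if P i j \<and> P i j' then 1 else 0)"
    if j: "j < n" and j': "j' < n" for j j'
  proof -
    have "cmod ((mat_adjoint U * Dg n d * U - Dg n e) $$ (j, j')) \<le>
        (\<Sum>i<n. cmod (cnj (U $$ (i, j)) * U $$ (i, j') * complex_of_real (d i - e j)))"
      unfolding Y_entry[OF U j j'] by (rule norm_sum)
    also have "\<dots> \<le> (\<Sum>i<n. \<epsilon> * (if P i j \<and> P i j' then 1 else 0))"
    proof (rule sum_mono)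
      fix i assume "i \<in> {..<n}"
      hence i: "i < n" by simp
      show "cmod (cnj (U $$ (i, j)) * U $$ (i, j') * complex_of_real (d i - e j)) \<le> \<epsilon> * (if P i j \<and> P i j' then 1 else 0)"
      proof (cases "P i j \<and> P i j'")
        case True
        have "cmod (cnj (U $$ (i, j)) * U $$ (i, j') * complex_of_real (d i - e j))
            = cmod (U $$ (i, j)) * cmod (U $$ (i, j')) * \<bar>d i - e j\<bar>" by (simp add: norm_mult del: of_real_diff)
        also have "\<dots> \<le> 1 * 1 * \<epsilon>"
          using iso_entry_le1[OF U i j] iso_entry_le1[OF U i j'] H[OF i j] True unfolding P_def
          by (intro mult_mono) auto
        finally show ?thesis using True by simp
      next
        case False thus ?thesis unfolding P_def by auto
      qed
    qed
    also have "\<dots> = \<epsilon> * (\<Sum>i<n. if P i j \<and> P i j' then 1 else 0)" by (simp add: sum_distrib_left)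
    finally show ?thesis .
  qed
  have cl': "\<And>i. i < n \<Longrightarrow> card {j. j < n \<and> P i j} \<le> L" using cl unfolding P_def by auto
  have cM': "\<And>j. j < n \<Longrightarrow> card {i. i < n \<and> P i j} \<le> M" using cM unfolding P_def by auto
  show ?thesis
  proof (rule schur[OF Yc w])
    show "0 \<le> \<epsilon> * (real L * real M)" using eps by simp
    fix j assume j: "j < n"
    have "(\<Sum>j'<n. cmod ((mat_adjoint U * Dg n d * U - Dg n e) $$ (j, j')))
        \<le> (\<Sum>j'<n. \<epsilon> * (\<Sum>i<n. if P i j \<and> P i j' then 1 else 0))"
      using ent j by (intro sum_mono) auto
    also have "\<dots> = \<epsilon> * (\<Sum>j'<n. \<Sum>i<n. if P i j \<and> P i j' then 1 else 0)" by (simp add: sum_distrib_left)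
    also have "\<dots> \<le> \<epsilon> * (real L * real M)"
      using count_bound[OF cl' cM' j] eps by (intro mult_left_mono) auto
    finally show "(\<Sum>j'<n. cmod ((mat_adjoint U * Dg n d * U - Dg n e) $$ (j, j'))) \<le> \<epsilon> * (real L * real M)" .
    have "(\<Sum>i<n. cmod ((mat_adjoint U * Dg n d * U - Dg n e) $$ (i, j)))
        \<le> (\<Sum>i<n. \<epsilon> * (\<Sum>k<n. if P k j \<and> P k i then 1 else 0))"
      using ent j by (intro sum_mono) (auto simp: conj_commute)
    also have "\<dots> = \<epsilon> * (\<Sum>i<n. \<Sum>k<n. if P k j \<and> P k i then 1 else 0)" by (simp add: sum_distrib_left)
    also have "\<dots> \<le> \<epsilon> * (real L * real M)"
      using count_bound[OF cl' cM' j] eps by (intro mult_left_mono) auto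
    finally show "(\<Sum>i<n. cmod ((mat_adjoint U * Dg n d * U - Dg n e) $$ (i, j))) \<le> \<epsilon> * (real L * real M)" .
  qed
qed

lemma pow_mat_Suc':
  assumes A: "A \<in> carrier_mat n n"
  shows "A ^\<^sub>m Suc k = A * A ^\<^sub>m k"
proof (induction k)
  case 0 thus ?case using A by simp
next
  case (Suc k)
  have "A ^\<^sub>m Suc (Suc k) = (A * A ^\<^sub>m k) * A" using Suc by simp
  also have "\<dots> = A * (A ^\<^sub>m k * A)" using A by (rule assoc_mult_mat) (use A in auto)
  finally show ?case by simp
qed

lemma vnorm_zero: "(\<And>i. i < dim_vec x \<Longrightarrow> x $ i = 0) \<Longrightarrow> vnorm x = 0"
  unfolding vnorm_def by simp

lemma telescope:
  assumes U: "iso U n" and Ua: "iso (mat_adjoint U) n"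
    and step: "\<And>s w. w \<in> carrier_vec n \<Longrightarrow>
       vnorm ((mat_adjoint U * Dg n (d s) * U - Dg n (d (Suc s))) *\<^sub>v w) \<le> c s * vnorm w"
  shows "v \<in> carrier_vec n \<Longrightarrow>
     vnorm (((mat_adjoint U ^\<^sub>m N) * Dg n (d s) * (U ^\<^sub>m N) - Dg n (d (s + N))) *\<^sub>v v)
       \<le> (\<Sum>k\<in>{s..<s + N}. c k) * vnorm v"
proof (induction N arbitrary: s v)
  have Uc: "U \<in> carrier_mat n n" using U unfolding iso_def by auto
  have Uac: "mat_adjoint U \<in> carrier_mat n n" using Ua unfolding iso_def by auto
  { case 0
    have "((mat_adjoint U ^\<^sub>m 0) * Dg n (d s) * (U ^\<^sub>m 0) - Dg n (d (s + 0))) *\<^sub>v v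
          = Dg n (d s) *\<^sub>v v - Dg n (d s) *\<^sub>v v"
      using Uc Uac 0 by (simp add: minus_mult_distrib_mat_vec[of _ n n])
    moreover have "vnorm (Dg n (d s) *\<^sub>v v - Dg n (d s) *\<^sub>v v) = 0" by (rule vnorm_zero) auto
    ultimately show ?case by simp }
  { case (Suc N)
    define Uad where "Uad = mat_adjoint U"
    have Uadc: "Uad \<in> carrier_mat n n" unfolding Uad_def by (rule Uac)
    define Up where "Up = U ^\<^sub>m N"
    define Uap where "Uap = Uad ^\<^sub>m N"
    have Upc: "Up \<in> carrier_mat n n" unfolding Up_def using Uc by simp
    have Uapc: "Uap \<in> carrier_mat n n" unfolding Uap_def using Uadc by simp
    define Ds where "Ds = Dg n (d s)"
    define D1 where "D1 = Dg n (d (Suc s))"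
    define D' where "D' = Dg n (d (s + Suc N))"
    have D'eq: "Dg n (d (Suc s + N)) = D'" unfolding D'_def by simp
    define w where "w = Up *\<^sub>v v"
    have wc: "w \<in> carrier_vec n" unfolding w_def using Upc Suc.prems by simp
    define a where "a = Uad *\<^sub>v (Ds *\<^sub>v (U *\<^sub>v w))"
    define b where "b = D1 *\<^sub>v w"
    define Y where "Y = Uad * Ds * U - D1"
    have ac: "a \<in> carrier_vec n" unfolding a_def using Uadc Uc wc by (auto intro!: mult_mat_vec_carrier[of _ n n] simp: Ds_def)
    have bc: "b \<in> carrier_vec n" unfolding b_def using wc by (auto intro!: mult_mat_vec_carrier[of _ n n] simp: D1_def)
    have Ywc: "Y *\<^sub>v w \<in> carrier_vec n" unfolding Y_def using Uadc Uc wc by (auto intro!: mult_mat_vec_carrier[of _ n n] minus_carrier_mat mult_carrier_mat simp: Ds_def D1_def)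
    have p1: "Uad ^\<^sub>m Suc N = Uap * Uad" unfolding Uap_def by simp
    have p2: "U ^\<^sub>m Suc N = U * Up" unfolding Up_def by (rule pow_mat_Suc'[OF Uc])
    have Dsc: "Ds \<in> carrier_mat n n" "D1 \<in> carrier_mat n n" "D' \<in> carrier_mat n n"
      unfolding Ds_def D1_def D'_def by auto
    have e1: "(Uad ^\<^sub>m Suc N * Ds * U ^\<^sub>m Suc N) *\<^sub>v v = Uap *\<^sub>v a"
    proof -
      have "(Uad ^\<^sub>m Suc N * Ds * U ^\<^sub>m Suc N) *\<^sub>v v = ((Uap * Uad) * Ds) *\<^sub>v ((U * Up) *\<^sub>v v)"
        unfolding p1 p2 using Uapc Uadc Dsc Uc Upc Suc.prems
        by (intro assoc_mult_mat_vec[of _ n n _ n]) auto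
      also have "(U * Up) *\<^sub>v v = U *\<^sub>v w" unfolding w_def using Uc Upc Suc.prems by simp
      also have "((Uap * Uad) * Ds) *\<^sub>v (U *\<^sub>v w) = (Uap * Uad) *\<^sub>v (Ds *\<^sub>v (U *\<^sub>v w))"
        using Uapc Uadc Dsc Uc wc by (intro assoc_mult_mat_vec[of _ n n _ n]) auto
      also have "\<dots> = Uap *\<^sub>v a" unfolding a_def using Uapc Uadc Dsc Uc wc
        by (intro assoc_mult_mat_vec[of _ n n _ n]) auto
      finally show ?thesis .
    qed
    have e2: "(Uap * D1 * Up) *\<^sub>v v = Uap *\<^sub>v b"
    proof -
      have "(Uap * D1 * Up) *\<^sub>v v = (Uap * D1) *\<^sub>v w"
        unfolding w_def using Uapc Dsc Upc Suc.prems by (intro assoc_mult_mat_vec[of _ n n _ n]) auto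
      also have "\<dots> = Uap *\<^sub>v b" unfolding b_def using Uapc Dsc wc by (intro assoc_mult_mat_vec[of _ n n _ n]) auto
      finally show ?thesis .
    qed
    have e3: "Y *\<^sub>v w = a - b"
    proof -
      have "Y *\<^sub>v w = (Uad * Ds * U) *\<^sub>v w - D1 *\<^sub>v w"
        unfolding Y_def using Uadc Dsc Uc wc by (intro minus_mult_distrib_mat_vec[of _ n n]) auto
      also have "(Uad * Ds * U) *\<^sub>v w = (Uad * Ds) *\<^sub>v (U *\<^sub>v w)"
        using Uadc Dsc Uc wc by (intro assoc_mult_mat_vec[of _ n n _ n]) auto
      also have "\<dots> = a" unfolding a_def using Uadc Dsc Uc wc by (intro assoc_mult_mat_vec[of _ n n _ n]) auto
      finally show ?thesis unfolding b_def .
    qed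
    have e4: "a = b + Y *\<^sub>v w" unfolding e3 using ac bc by (intro eq_vecI) auto
    have e5: "Uap *\<^sub>v a = Uap *\<^sub>v b + Uap *\<^sub>v (Y *\<^sub>v w)"
      unfolding e4 using Uapc bc Ywc by (rule mult_add_distrib_mat_vec)
    have split: "((Uad ^\<^sub>m Suc N) * Ds * (U ^\<^sub>m Suc N) - D') *\<^sub>v v
        = ((Uap * D1 * Up) - D') *\<^sub>v v + Uap *\<^sub>v (Y *\<^sub>v w)"
    proof -
      have l: "((Uad ^\<^sub>m Suc N) * Ds * (U ^\<^sub>m Suc N) - D') *\<^sub>v v = Uap *\<^sub>v a - D' *\<^sub>v v"
        using Uadc Dsc Uc Suc.prems e1 by (subst minus_mult_distrib_mat_vec[of _ n n]) auto
      have r: "((Uap * D1 * Up) - D') *\<^sub>v v = Uap *\<^sub>v b - D' *\<^sub>v v"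
        using Uapc Dsc Upc Suc.prems e2 by (subst minus_mult_distrib_mat_vec[of _ n n]) auto
      show ?thesis unfolding l r e5 using Uapc bc Ywc Dsc Suc.prems by (intro eq_vecI) auto
    qed
    have "vnorm (((mat_adjoint U ^\<^sub>m Suc N) * Dg n (d s) * (U ^\<^sub>m Suc N) - Dg n (d (s + Suc N))) *\<^sub>v v)
        = vnorm (((Uap * D1 * Up) - D') *\<^sub>v v + Uap *\<^sub>v (Y *\<^sub>v w))"
      using split unfolding Uad_def Ds_def D'_def by simp
    also have "\<dots> \<le> vnorm (((Uap * D1 * Up) - D') *\<^sub>v v) + vnorm (Uap *\<^sub>v (Y *\<^sub>v w))"
      by (rule vnorm_triangle) (use Uapc Dsc in auto)
    also have "vnorm (((Uap * D1 * Up) - D') *\<^sub>v v) \<le> (\<Sum>k\<in>{Suc s..<Suc s + N}. c k) * vnorm v"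
      using Suc.IH[of v "Suc s"] Suc.prems D'eq unfolding Uap_def Uad_def D1_def Up_def by simp
    also have "vnorm (Uap *\<^sub>v (Y *\<^sub>v w)) = vnorm (Y *\<^sub>v w)"
      unfolding Uap_def Uad_def by (rule iso_pow_norm[OF Ua Ywc[unfolded Uad_def]])
    also have "vnorm (Y *\<^sub>v w) \<le> c s * vnorm w"
      unfolding Y_def Uad_def Ds_def D1_def by (rule step[OF wc])
    also have "vnorm w = vnorm v" unfolding w_def Up_def by (rule iso_pow_norm[OF U Suc.prems])
    also have "(\<Sum>k\<in>{Suc s..<Suc s + N}. c k) * vnorm v + c s * vnorm v = (\<Sum>k\<in>{s..<s + Suc N}. c k) * vnorm v"
      by (simp add: sum.atLeast_Suc_lessThan algebra_simps)
    finally show ?case by simp }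
qed

lemma sum_pow_le:
  fixes M :: real
  assumes "M \<ge> 2"
  shows "(\<Sum>k<N. M ^ k) \<le> M ^ N"
proof (induction N)
  case 0 thus ?case by simp
next
  case (Suc N)
  have "(\<Sum>k<Suc N. M ^ k) = (\<Sum>k<N. M ^ k) + M ^ N" by simp
  also have "\<dots> \<le> 2 * M ^ N" using Suc by simp
  also have "\<dots> \<le> M * M ^ N" using assms by (intro mult_right_mono) auto
  finally show ?case by simp
qed

lemma cond2_dvd:
  assumes c2: "cond2 Lam N"
  shows "k \<ge> 1 \<Longrightarrow> N 1 dvd N k \<and> 0 < N k"
proof (induction k)
  case 0 thus ?case by simp
next
  case (Suc k)
  show ?case
  proof (cases "k = 0")
    case True thus ?thesis using c2 unfolding cond2_def by auto
  next
    case False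
    hence "k \<ge> 1" by simp
    hence "N 1 dvd N k" "N k dvd N (Suc k)" "0 < N (Suc k)" using Suc.IH c2 unfolding cond2_def
      by (auto intro: le_SucI)
    thus ?thesis using dvd_trans by blast
  qed
qed

theorem theorem5:
  fixes T :: "real \<Rightarrow> real" and Lam :: "nat list"
  assumes "cond1 T Lam" and "quantizable T Lam"
  shows "\<exists>D::real. \<forall>(N::nat \<Rightarrow> nat) (k::nat) (U::complex mat) (f::real \<Rightarrow> real) (n::nat).
     cond2 Lam N \<longrightarrow> k \<ge> 1 \<longrightarrow> is_quantization T (N k) U \<longrightarrow> lip_circ f \<longrightarrow> n \<ge> 1 \<longrightarrow>
     opnorm ((mat_adjoint U ^\<^sub>m n) * Op (N k) f * (U ^\<^sub>m n) - Op (N k) (f \<circ> (T ^^ n)))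
       \<le> D * lip_norm f * real (Max (set Lam)) ^ n / real (N k)"
proof -
  interpret qsetup T Lam using assms(1) by unfold_locales
  define D where "D = 2 * real (length Lam) * real MM ^ 2"
  show ?thesis
  proof (intro exI[of _ D] allI impI)
    fix N :: "nat \<Rightarrow> nat" and k :: nat and U :: "complex mat" and f :: "real \<Rightarrow> real" and nn :: nat
    assume c2: "cond2 Lam N" and k1: "1 \<le> k" and U: "is_quantization T (N k) U" and f: "lip_circ f" and nn1: "1 \<le> nn"
    define n where "n = N k"
    have dv: "N 1 dvd n" "0 < n" using cond2_dvd[OF c2 k1] unfolding n_def by auto
    then obtain q where q: "n = N 1 * q" by (auto elim: dvdE)
    have qpos: "q > 0" using q dv(2) by (cases q) auto
    have N1pos: "N 1 > 0" using q dv(2) by (cases "N 1") auto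
    define p where "p m = (SOME i. endpt Lam m = real i / real (N 1)) * q" for m
    have pdef: "a m = real (p m) / real n" if m: "m \<le> l" for m
    proof -
      have "\<exists>i. endpt Lam m = real i / real (N 1)" using c2 m unfolding cond2_def by auto
      hence e: "endpt Lam m = real (SOME i. endpt Lam m = real i / real (N 1)) / real (N 1)" by (rule someI_ex)
      show ?thesis unfolding p_def q using qpos N1pos e by (simp add: field_simps)
    qed
    interpret qgrid T Lam n p
      by unfold_locales (use assms(1) dv(2) pdef in auto)
    have Uu: "unitary_mat U n" using U unfolding is_quantization_def n_def by auto
    have U': "is_quantization T n U" using U unfolding n_def .
    have Ui: "iso U n" and Uai: "iso (mat_adjoint U) n" using unitary_iso[OF Uu] by auto
    have Uc: "U \<in> carrier_mat n n" using Uu unfolding unitary_mat_def by auto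
    define d where "d s = (\<lambda>i. real n * integral (cell n i) (f \<circ> (T ^^ s)))" for s
    define c where "c s = (2 * LL f * real MM ^ Suc s / real n) * (real l * real MM)" for s
    have LL0: "LL f \<ge> 0" by (rule LL_nonneg[OF f])
    have step: "vnorm ((mat_adjoint U * Dg n (d s) * U - Dg n (d (Suc s))) *\<^sub>v w) \<le> c s * vnorm w"
      if w: "w \<in> carrier_vec n" for s w
      unfolding c_def
    proof (rule Y_norm[OF Ui _ _ _ _ w])
      show "0 \<le> 2 * LL f * real MM ^ Suc s / real n" using LL0 by simp
      show "\<bar>d s i - d (Suc s) j\<bar> \<le> 2 * LL f * real MM ^ Suc s / real n"
        if "i < n" "j < n" "U $$ (i, j) \<noteq> 0" for i j
        unfolding d_def using step_err[OF U' f that] .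
      show "card {j. j < n \<and> U $$ (i, j) \<noteq> 0} \<le> l" if "i < n" for i by (rule card_row[OF U' that])
      show "card {i. i < n \<and> U $$ (i, j) \<noteq> 0} \<le> MM" if "j < n" for j by (rule card_col[OF U' that])
    qed
    have f0: "f \<circ> (T ^^ 0) = f" by (simp add: comp_def)
    have Op0: "Op n f = Dg n (d 0)" unfolding Op_def Dg_def d_def f0 by simp
    have Opn: "Op n (f \<circ> (T ^^ nn)) = Dg n (d nn)" unfolding Op_def Dg_def d_def by simp
    define X where "X = (mat_adjoint U ^\<^sub>m nn) * Op n f * (U ^\<^sub>m nn) - Op n (f \<circ> (T ^^ nn))"
    have Xv: "vnorm (X *\<^sub>v v) \<le> (\<Sum>k\<in>{0..<0 + nn}. c k) * vnorm v" if v: "v \<in> carrier_vec n" for v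
      unfolding X_def Op0 Opn using telescope[where d=d and c=c and N=nn and s=0, OF Ui Uai step v] by simp
    have MM2: "real MM \<ge> 2" using MM_ge2 by simp
    have sumc: "(\<Sum>k\<in>{0..<0 + nn}. c k) \<le> D * lip_norm f * real MM ^ nn / real n"
    proof -
      have "(\<Sum>k\<in>{0..<0 + nn}. c k) = (2 * LL f * real l * real MM ^ 2 / real n) * (\<Sum>k<nn. real MM ^ k)"
        unfolding c_def by (simp add: atLeast0LessThan sum_distrib_left sum_distrib_right power2_eq_square mult_ac sum_divide_distrib)
      also have "\<dots> \<le> (2 * LL f * real l * real MM ^ 2 / real n) * real MM ^ nn"
        using sum_pow_le[OF MM2, of nn] LL0 by (intro mult_left_mono) auto
      also have "\<dots> \<le> (2 * lip_norm f * real l * real MM ^ 2 / real n) * real MM ^ nn"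
      proof -
        have "bdd_above ((\<lambda>x. \<bar>f x\<bar>) ` {0..<1})" using f unfolding lip_circ_def by auto
        hence "\<bar>f 0\<bar> \<le> (SUP x\<in>{0..<1}. \<bar>f x\<bar>)" by (intro cSUP_upper) auto
        hence "0 \<le> (SUP x\<in>{0..<1}. \<bar>f x\<bar>)" by linarith
        hence "LL f \<le> lip_norm f" unfolding lip_norm_def LL_def by simp
        thus ?thesis using LL0 by (intro mult_right_mono divide_right_mono mult_mono) auto
      qed
      also have "\<dots> = D * lip_norm f * real MM ^ nn / real n" unfolding D_def by (simp add: mult_ac)
      finally show ?thesis .
    qed
    have C0: "0 \<le> (\<Sum>k\<in>{0..<0 + nn}. c k)" unfolding c_def using LL0 by (intro sum_nonneg) simp
    have dimX: "dim_col X = n" unfolding X_def Op_def by simp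
    have "opnorm X \<le> D * lip_norm f * real MM ^ nn / real n"
      unfolding opnorm_def
    proof (rule cSup_least)
      have "vnorm (0\<^sub>v n) = 0" by (rule vnorm_zero) auto
      hence "vnorm (X *\<^sub>v 0\<^sub>v n) \<in> {vnorm (X *\<^sub>v x) |x. x \<in> carrier_vec (dim_col X) \<and> vnorm x \<le> 1}"
        unfolding dimX by auto
      thus "{vnorm (X *\<^sub>v x) |x. x \<in> carrier_vec (dim_col X) \<and> vnorm x \<le> 1} \<noteq> {}" by blast
      fix y assume "y \<in> {vnorm (X *\<^sub>v x) |x. x \<in> carrier_vec (dim_col X) \<and> vnorm x \<le> 1}"
      then obtain x where x: "y = vnorm (X *\<^sub>v x)" "x \<in> carrier_vec n" "vnorm x \<le> 1" unfolding dimX by auto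
      have "y \<le> (\<Sum>k\<in>{0..<0 + nn}. c k) * vnorm x" using Xv[OF x(2)] x(1) by simp
      also have "\<dots> \<le> (\<Sum>k\<in>{0..<0 + nn}. c k) * 1" using C0 x(3) by (intro mult_left_mono) auto
      also have "\<dots> \<le> D * lip_norm f * real MM ^ nn / real n" using sumc by simp
      finally show "y \<le> D * lip_norm f * real MM ^ nn / real n" .
    qed
    thus "opnorm ((mat_adjoint U ^\<^sub>m nn) * Op (N k) f * (U ^\<^sub>m nn) - Op (N k) (f \<circ> (T ^^ nn)))
       \<le> D * lip_norm f * real (Max (set Lam)) ^ nn / real (N k)"
      unfolding X_def n_def MM_def .
  qed
qed

end
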